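(* For every prime $p$ there exist $\varepsilon(p),\delta(p)\in(0,\infty)$ such that the following holds. Let $n\geq p^2$ be an integer and let $\varepsilon<\varepsilon(p)$. Then every $(C,\mathbf 1,\mathbb{F}_p^n,\varepsilon)$-arithmetic expander, where $C$ is the $p$-term arithmetic progression matrix, has size at least $\delta(p)\,n^{p-1}$. Concretely: if $D\subseteq\mathbb{F}_p^n$ is a multiset with $\lambda_{L_{\mathbb{F}_p^n}}(L_D)\leq\varepsilon$, then $|D|\geq\delta(p)\,n^{p-1}$ (with $|D|$ counted with multiplicity).
   Context: For a $t$-linear form $A$ on $\mathbb{R}^V$ and $r\in[1,\infty]$ let $\|A\|_{\ell_r,\dots,\ell_r}=\sup\{A(x[1],\dots,x[t])/(\|x[1]\|_{\ell_r}\cdots\|x[t]\|_{\ell_r}) : x[1],\dots,x[t]\in\mathbb{R}^V\setminus\{0\}\}$. For a nonempty multiset $D\subseteq\mathbb{F}_p^n$, let $L_D$ be the $p$-uniform hypergraph on vertex set $\mathbb{F}_p^n$ in which the multiplicity of the edge $\{u_1,\dots,u_p\}$ is $e_{L_D}(u_1,\dots,u_p)=\sum_{y\in D}\sum_{x\in\mathbb{F}_p^n}\sum_{\sigma\in S_p}\prod_{i=1}^p 1[u_i=x+(\sigma(i)-1)y]$ (sum over $D$ with multiplicity, $S_p$ the permutations of $\{1,\dots,p\}$). Its normalized adjacency form $A_{L_D}$ is the $p$-linear form on $\mathbb{R}^{\mathbb{F}_p^n}$ determined by $A_{L_D}(1_{\{u_1\}},\dots,1_{\{u_p\}})=e_{L_D}(u_1,\dots,u_p)/(p!\,|D|)$.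 For hypergraphs $H,K$ of this type set $\lambda_K(H)=\|A_H-A_K\|_{\ell_p,\dots,\ell_p}$. $L_{\mathbb{F}_p^n}$ denotes $L_D$ with $D=\mathbb{F}_p^n$ (every element once). The AP matrix $C\in\mathbb{Z}^{(p-2)\times p}$ has rows $(0,\dots,0,1,-2,1,0,\dots,0)$; its solution set in $(\mathbb{F}_p^n)^p$ consists of the $p$-term progressions $(x,x+y,\dots,x+(p-1)y)$, which are the cosets of the diagonal $\{(u,\dots,u)\}$ with representatives $(0,y,2y,\dots,(p-1)y)$; a $(C,\mathbf 1,\mathbb{F}_p^n,\varepsilon)$-arithmetic expander is a multiset of such representatives, i.e. indexed by a multiset $D$ of steps $y$, such that $\lambda_{L_{\mathbb{F}_p^n}}(L_D)\leq\varepsilon$; its size is $|D|$. *)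

theory Defs
  imports Complex_Main "HOL-Computational_Algebra.Primes" "HOL-Library.Multiset" "HOL-Library.FuncSet" "HOL-Combinatorics.Permutations"
begin

definition Fpn :: "nat \<Rightarrow> nat \<Rightarrow> (nat \<Rightarrow> nat) set" where
  "Fpn p n = {x. (\<forall>j<n. x j < p) \<and> (\<forall>j\<ge>n. x j = 0)}"

definition ap_point :: "nat \<Rightarrow> (nat \<Rightarrow> nat) \<Rightarrow> nat \<Rightarrow> (nat \<Rightarrow> nat) \<Rightarrow> (nat \<Rightarrow> nat)" where
  "ap_point p x k y = (\<lambda>j. (x j + k * y j) mod p)"

text \<open>Edge multiplicity e_{L_D}(u_0,...,u_{p-1}) (0-indexed: u i corresponds to u_{i+1},
  and a permutation sigma of {0..<p} corresponds to sigma(i+1)-1).\<close>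
definition edge_mult :: "nat \<Rightarrow> nat \<Rightarrow> (nat \<Rightarrow> nat) multiset \<Rightarrow> (nat \<Rightarrow> (nat \<Rightarrow> nat)) \<Rightarrow> real" where
  "edge_mult p n D u =
     (\<Sum>y\<in>#D. \<Sum>x\<in>Fpn p n. \<Sum>\<sigma>\<in>{\<sigma>. \<sigma> permutes {0..<p}}.
        \<Prod>i<p. (if u i = ap_point p x (\<sigma> i) y then 1 else 0))"

definition adj_form :: "nat \<Rightarrow> nat \<Rightarrow> (nat \<Rightarrow> nat) multiset \<Rightarrow> (nat \<Rightarrow> (nat \<Rightarrow> nat) \<Rightarrow> real) \<Rightarrow> real" where
  "adj_form p n D f =
     (\<Sum>u\<in>{0..<p} \<rightarrow>\<^sub>E Fpn p n.
        edge_mult p n D u / (fact p * real (size D)) * (\<Prod>i<p. f i (u i)))"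

definition lr_norm :: "nat \<Rightarrow> nat \<Rightarrow> real \<Rightarrow> ((nat \<Rightarrow> nat) \<Rightarrow> real) \<Rightarrow> real" where
  "lr_norm p n r g = (\<Sum>v\<in>Fpn p n. \<bar>g v\<bar> powr r) powr (1 / r)"

definition form_norm :: "nat \<Rightarrow> nat \<Rightarrow> ((nat \<Rightarrow> (nat \<Rightarrow> nat) \<Rightarrow> real) \<Rightarrow> real) \<Rightarrow> real" where
  "form_norm p n A =
     (SUP f\<in>{f. \<forall>i<p. \<exists>v\<in>Fpn p n. f i v \<noteq> 0}.
        A f / (\<Prod>i<p. lr_norm p n (real p) (f i)))"

definition lambda_AP :: "nat \<Rightarrow> nat \<Rightarrow> (nat \<Rightarrow> nat) multiset \<Rightarrow> real" where
  "lambda_AP p n D =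
     form_norm p n (\<lambda>f. adj_form p n D f - adj_form p n (mset_set (Fpn p n)) f)"

end

theory Submission
  imports Defs "HOL-Number_Theory.Number_Theory"
begin


lemma box_bij:
  assumes "finite J"
  shows "bij_betw (\<lambda>x. restrict x J) {x::nat\<Rightarrow>nat. (\<forall>j\<in>J. x j < p) \<and> (\<forall>j. j\<notin>J \<longrightarrow> x j = c j)}
           (PiE J (\<lambda>_. {..<p}))"
proof -
  let ?B = "{x::nat\<Rightarrow>nat. (\<forall>j\<in>J. x j < p) \<and> (\<forall>j. j\<notin>J \<longrightarrow> x j = c j)}"
  have inj: "inj_on (\<lambda>x. restrict x J) ?B"
  proof (rule inj_onI)
    fix x y assume xy: "x \<in> ?B" "y \<in> ?B" "restrict x J = restrict y J"
    show "x = y"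
    proof
      fix j
      show "x j = y j"
      proof (cases "j \<in> J")
        case True
        then show ?thesis using fun_cong[OF xy(3), of j] by simp
      next
        case False
        then show ?thesis using xy(1,2) by simp
      qed
    qed
  qed
  have "(\<lambda>x. restrict x J) ` ?B = PiE J (\<lambda>_. {..<p})"
  proof
    show "(\<lambda>x. restrict x J) ` ?B \<subseteq> PiE J (\<lambda>_. {..<p})" by auto
    show "PiE J (\<lambda>_. {..<p}) \<subseteq> (\<lambda>x. restrict x J) ` ?B"
    proof
      fix g assume g: "g \<in> PiE J (\<lambda>_. {..<p})"
      let ?x = "\<lambda>j. if j \<in> J then g j else c j"
      have xB: "?x \<in> ?B" using g by auto
      have xg: "restrict ?x J = g"
      proof
        fix j show "restrict ?x J j = g j"
        proof (cases "j \<in> J")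
          case True then show ?thesis by simp
        next
          case False then show ?thesis using PiE_arb[OF g False] by simp
        qed
      qed
      show "g \<in> (\<lambda>x. restrict x J) ` ?B" using image_eqI[where f="\<lambda>x. restrict x J", OF xg[symmetric] xB] .
    qed
  qed
  with inj show ?thesis by (simp add: bij_betw_def)
qed

lemma box_card:
  assumes "finite J"
  shows "card {x::nat\<Rightarrow>nat. (\<forall>j\<in>J. x j < p) \<and> (\<forall>j. j\<notin>J \<longrightarrow> x j = c j)} = p ^ card J"
    and "finite {x::nat\<Rightarrow>nat. (\<forall>j\<in>J. x j < p) \<and> (\<forall>j. j\<notin>J \<longrightarrow> x j = c j)}"
proof -
  note b = box_bij[OF assms, of p c]
  show "card {x::nat\<Rightarrow>nat. (\<forall>j\<in>J. x j < p) \<and> (\<forall>j. j\<notin>J \<longrightarrow> x j = c j)} = p ^ card J"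
    using bij_betw_same_card[OF b] assms by (simp add: card_PiE)
  show "finite {x::nat\<Rightarrow>nat. (\<forall>j\<in>J. x j < p) \<and> (\<forall>j. j\<notin>J \<longrightarrow> x j = c j)}"
  proof -
    have fin: "finite (PiE J (\<lambda>_. {..<p}))" by (rule finite_PiE) (use assms in auto)
    show ?thesis using bij_betw_finite[OF b] fin by blast
  qed
qed

lemma Fpn_box: "Fpn p n = {x::nat\<Rightarrow>nat. (\<forall>j\<in>{..<n}. x j < p) \<and> (\<forall>j. j\<notin>{..<n} \<longrightarrow> x j = (\<lambda>_. 0) j)}"
  by (auto simp: Fpn_def)

lemma Fpn_finite: "finite (Fpn p n)"
  unfolding Fpn_box by (rule box_card(2)) simp

lemma Fpn_card: "card (Fpn p n) = p ^ n"
  unfolding Fpn_box by (subst box_card(1)) simp_all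

lemma ap_in_Fpn: "0 < p \<Longrightarrow> x \<in> Fpn p n \<Longrightarrow> y \<in> Fpn p n \<Longrightarrow> ap_point p x k y \<in> Fpn p n"
  by (auto simp: Fpn_def ap_point_def)

lemma sum_mset_swap_set:
  "(\<Sum>u\<in>U. \<Sum>y\<in>#D. g y u) = (\<Sum>y\<in>#D. \<Sum>u\<in>U. g y u)"
  by (induction D) (auto simp: sum.distrib)

lemma sum_mset_cong':
  "(\<And>y. y \<in># D \<Longrightarrow> f y = g y) \<Longrightarrow> (\<Sum>y\<in>#D. f y) = (\<Sum>y\<in>#D. g y)"
  by (induction D) auto

lemma sum_delta_mult:
  assumes "finite F" "a \<in> F"
  shows "(\<Sum>v\<in>F. (if v = a then 1 else 0) * (g v::real)) = g a"
proof -
  have "(\<Sum>v\<in>F. (if v = a then 1 else 0) * g v) = (\<Sum>v\<in>F. if v = a then g v else 0)"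
    by (rule sum.cong) auto
  then show ?thesis using assms by simp
qed

lemma adj_formula:
  assumes p: "0 < p" and D: "set_mset D \<subseteq> Fpn p n"
  shows "adj_form p n D f =
    (\<Sum>y\<in>#D. \<Sum>x\<in>Fpn p n. \<Sum>\<sigma>\<in>{\<sigma>. \<sigma> permutes {0..<p}}. \<Prod>i<p. f i (ap_point p x (\<sigma> i) y))
      / (fact p * real (size D))"
proof -
  let ?P = "{\<sigma>. \<sigma> permutes {0..<p}}"
  let ?U = "{0..<p} \<rightarrow>\<^sub>E Fpn p n"
  have step: "(\<Sum>u\<in>?U. edge_mult p n D u * (\<Prod>i<p. f i (u i)))
      = (\<Sum>y\<in>#D. \<Sum>x\<in>Fpn p n. \<Sum>\<sigma>\<in>?P. \<Prod>i<p. f i (ap_point p x (\<sigma> i) y))"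
  proof -
    have "(\<Sum>u\<in>?U. edge_mult p n D u * (\<Prod>i<p. f i (u i)))
        = (\<Sum>u\<in>?U. \<Sum>y\<in>#D. \<Sum>x\<in>Fpn p n. \<Sum>\<sigma>\<in>?P.
              \<Prod>i<p. (if u i = ap_point p x (\<sigma> i) y then 1 else 0) * f i (u i))"
      by (simp add: edge_mult_def sum_mset_distrib_right sum_distrib_right prod.distrib)
    also have "\<dots> = (\<Sum>y\<in>#D. \<Sum>x\<in>Fpn p n. \<Sum>\<sigma>\<in>?P. \<Sum>u\<in>?U.
              \<Prod>i<p. (if u i = ap_point p x (\<sigma> i) y then 1 else 0) * f i (u i))"
      apply (subst sum_mset_swap_set)
      apply (rule sum_mset_cong')
      apply (simp only: sum.swap[where A="{0..<p} \<rightarrow>\<^sub>E Fpn p n"])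
      done
    also have "\<dots> = (\<Sum>y\<in>#D. \<Sum>x\<in>Fpn p n. \<Sum>\<sigma>\<in>?P. \<Prod>i<p. f i (ap_point p x (\<sigma> i) y))"
    proof (rule sum_mset_cong', rule sum.cong, rule refl, rule sum.cong, rule refl)
      fix y x \<sigma> assume y: "y \<in># D" and x: "x \<in> Fpn p n" and "\<sigma> \<in> ?P"
      have yF: "y \<in> Fpn p n" using y D by auto
      have "(\<Sum>u\<in>?U. \<Prod>i<p. (if u i = ap_point p x (\<sigma> i) y then 1 else 0) * f i (u i))
          = (\<Prod>i\<in>{0..<p}. \<Sum>v\<in>Fpn p n. (if v = ap_point p x (\<sigma> i) y then 1 else 0) * f i v)"
        by (subst prod_sum_PiE) (auto simp: Fpn_finite atLeast0LessThan)
      also have "\<dots> = (\<Prod>i<p. f i (ap_point p x (\<sigma> i) y))"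
        using ap_in_Fpn[OF p x yF] by (simp add: atLeast0LessThan sum_delta_mult Fpn_finite)
      finally show "(\<Sum>u\<in>?U. \<Prod>i<p. (if u i = ap_point p x (\<sigma> i) y then 1 else 0) * f i (u i))
          = (\<Prod>i<p. f i (ap_point p x (\<sigma> i) y))" .
    qed
    finally show ?thesis .
  qed
  have "adj_form p n D f = (\<Sum>u\<in>?U. edge_mult p n D u * (\<Prod>i<p. f i (u i))) / (fact p * real (size D))"
    by (simp add: adj_form_def sum_divide_distrib)
  with step show ?thesis by simp
qed



lemma power_sum_dvd:
  assumes p: "prime p" and m: "m < p - 1"
  shows "int p dvd (\<Sum>k<p. int k ^ m)"
  using m
proof (induction m rule: less_induct)
  case (less m)
  let ?S = "\<lambda>i. (\<Sum>k<p. int k ^ i)"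
  have tel: "(\<Sum>k<p. int (Suc k) ^ (Suc m) - int k ^ (Suc m)) = int p ^ Suc m"
    using sum_lessThan_telescope[of "\<lambda>k. int k ^ Suc m" p] by simp
  have bin: "int (Suc k) ^ (Suc m) - int k ^ (Suc m) = (\<Sum>i\<le>m. of_nat (Suc m choose i) * int k ^ i)" for k
  proof -
    have "int (Suc k) ^ (Suc m) = (int k + 1) ^ Suc m" by (simp add: add.commute)
    also have "\<dots> = (\<Sum>i\<le>Suc m. of_nat (Suc m choose i) * int k ^ i)"
      by (subst binomial_ring) simp
    finally show ?thesis by (simp add: sum.atMost_Suc)
  qed
  have "int p ^ Suc m = (\<Sum>i\<le>m. of_nat (Suc m choose i) * ?S i)"
    unfolding tel[symmetric] bin by (simp add: sum_distrib_left sum.swap[of _ "{..<p}"])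
  also have "\<dots> = (\<Sum>i<m. of_nat (Suc m choose i) * ?S i) + int (Suc m) * ?S m"
    by (simp add: lessThan_Suc_atMost[symmetric])
  finally have eq: "int (Suc m) * ?S m = int p ^ Suc m - (\<Sum>i<m. of_nat (Suc m choose i) * ?S i)"
    by simp
  have "int p dvd (\<Sum>i<m. of_nat (Suc m choose i) * ?S i)"
    using less by (intro dvd_sum) (auto intro: dvd_mult)
  then have "int p dvd int (Suc m) * ?S m" unfolding eq by simp
  moreover have "prime (int p)" using p by (simp add: prime_nat_int_transfer)
  moreover have "\<not> int p dvd int (Suc m)"
  proof
    assume "int p dvd int (Suc m)"
    then have "p dvd Suc m" by (simp only: int_dvd_int_iff)
    then have "p \<le> Suc m" by (rule dvd_imp_le) simp
    with less.prems show False by simp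
  qed
  ultimately show ?case by (simp add: prime_dvd_mult_iff)
qed

lemma power_sum_top:
  assumes p: "prime p"
  shows "[(\<Sum>k<p. int k ^ (p - 1)) = - 1] (mod int p)"
proof -
  have p2: "p \<ge> 2" using p by (simp add: prime_ge_2_nat)
  have "[(\<Sum>k<p. int k ^ (p - 1)) = (\<Sum>k<p. if k = 0 then 0 else 1)] (mod int p)"
  proof (rule cong_sum)
    fix k assume k: "k \<in> {..<p}"
    show "[int k ^ (p - 1) = (if k = 0 then 0 else 1)] (mod int p)"
    proof (cases "k = 0")
      case True
      have "p - 1 \<noteq> 0" using p2 by simp
      then show ?thesis using True by (simp add: zero_power)
    next
      case False
      then have "\<not> p dvd k" using k by (auto dest: dvd_imp_le)
      then have "[k ^ (p - 1) = 1] (mod p)" using fermat_theorem[OF p] by blast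
      then have "[int (k ^ (p - 1)) = int 1] (mod int p)" by (simp only: cong_int_iff)
      then show ?thesis using False by simp
    qed
  qed
  also have "(\<Sum>k<p. if k = 0 then 0 else 1) = (int p - 1)"
  proof -
    obtain q where q: "p = Suc q" using p2 by (cases p) auto
    have "(\<Sum>k<Suc q. if k = 0 then 0 else (1::int)) = int q"
      by (simp only: sum.lessThan_Suc_shift) simp
    then show ?thesis using q by simp
  qed
  also have "[int p - 1 = - 1] (mod int p)"
    by (simp add: cong_iff_dvd_diff)
  finally show ?thesis .
qed

lemma ap_sum_prod:
  fixes a b :: "nat \<Rightarrow> int"
  assumes p: "prime p" and S: "finite S" "card S = p - 1"
  shows "[(\<Sum>k<p. \<Prod>j\<in>S. a j + int k * b j) = - (\<Prod>j\<in>S. b j)] (mod int p)"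
proof -
  let ?S = "\<lambda>i. (\<Sum>k<p. int k ^ i)"
  have "(\<Sum>k<p. \<Prod>j\<in>S. a j + int k * b j)
      = (\<Sum>k<p. \<Sum>T\<in>Pow S. int k ^ card T * ((\<Prod>j\<in>T. b j) * (\<Prod>j\<in>S - T. a j)))"
  proof (rule sum.cong, rule refl)
    fix k
    have "(\<Prod>j\<in>S. a j + int k * b j) = (\<Prod>j\<in>S. int k * b j + a j)" by (simp add: add.commute)
    also have "\<dots> = (\<Sum>T\<in>Pow S. (\<Prod>j\<in>T. int k * b j) * (\<Prod>j\<in>S - T. a j))"
      by (rule prod_add[OF S(1)])
    also have "\<dots> = (\<Sum>T\<in>Pow S. int k ^ card T * ((\<Prod>j\<in>T. b j) * (\<Prod>j\<in>S - T. a j)))"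
      by (simp add: prod.distrib mult.assoc)
    finally show "(\<Prod>j\<in>S. a j + int k * b j) = \<dots>" .
  qed
  also have "\<dots> = (\<Sum>T\<in>Pow S. ?S (card T) * ((\<Prod>j\<in>T. b j) * (\<Prod>j\<in>S - T. a j)))"
    by (subst sum.swap) (simp add: sum_distrib_right)
  also have "[\<dots> = (\<Sum>T\<in>Pow S. if T = S then - (\<Prod>j\<in>S. b j) else 0)] (mod int p)"
  proof (rule cong_sum)
    fix T assume T: "T \<in> Pow S"
    show "[?S (card T) * ((\<Prod>j\<in>T. b j) * (\<Prod>j\<in>S - T. a j)) = (if T = S then - (\<Prod>j\<in>S. b j) else 0)] (mod int p)"
    proof (cases "T = S")
      case True
      have "[?S (card T) * ((\<Prod>j\<in>T. b j) * (\<Prod>j\<in>S - T. a j)) = (-1) * ((\<Prod>j\<in>T. b j) * (\<Prod>j\<in>S - T. a j))] (mod int p)"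
        using power_sum_top[OF p] True S by (intro cong_mult) simp_all
      then show ?thesis using True by simp
    next
      case False
      then have "T \<subset> S" using T by auto
      then have "card T < p - 1" using psubset_card_mono[OF S(1)] S(2) by simp
      then have "int p dvd ?S (card T)" by (rule power_sum_dvd[OF p])
      then show ?thesis using False by (simp add: cong_0_iff)
    qed
  qed
  also have "(\<Sum>T\<in>Pow S. if T = S then - (\<Prod>j\<in>S. b j) else 0) = - (\<Prod>j\<in>S. b j)"
    using S(1) by simp
  finally show ?thesis .
qed



definition fam :: "nat \<Rightarrow> nat \<Rightarrow> nat set set" where
  "fam n p = {S. S \<subseteq> {..<n} \<and> card S = p - 1}"

definition Qz :: "(nat set \<Rightarrow> int) \<Rightarrow> nat set set \<Rightarrow> (nat \<Rightarrow> nat) \<Rightarrow> int" where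
  "Qz d F y = (\<Sum>S\<in>F. d S * (\<Prod>j\<in>S. int (y j)))"

lemma fam_finite: "finite (fam n p)"
  unfolding fam_def by (rule finite_subset[of _ "Pow {..<n}"]) auto

lemma fam_card: "card (fam n p) = n choose (p - 1)"
  unfolding fam_def using n_subsets[of "{..<n}" "p - 1"] by simp

lemma ap_identity:
  assumes p: "prime p" and F: "F \<subseteq> fam n p"
  shows "[(\<Sum>k<p. Qz d F (ap_point p x k y)) = - Qz d F y] (mod int p)"
proof -
  have fF: "finite F" using F fam_finite finite_subset by blast
  have "[(\<Sum>k<p. Qz d F (ap_point p x k y))
        = (\<Sum>k<p. \<Sum>S\<in>F. d S * (\<Prod>j\<in>S. int (x j) + int k * int (y j)))] (mod int p)"
    unfolding Qz_def ap_point_def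
  proof (intro cong_sum cong_mult cong_refl cong_prod)
    fix k j
    show "[int ((x j + k * y j) mod p) = int (x j) + int k * int (y j)] (mod int p)"
      by (simp add: cong_def of_nat_mod)
  qed
  also have "(\<Sum>k<p. \<Sum>S\<in>F. d S * (\<Prod>j\<in>S. int (x j) + int k * int (y j)))
       = (\<Sum>S\<in>F. d S * (\<Sum>k<p. \<Prod>j\<in>S. int (x j) + int k * int (y j)))"
    by (subst sum.swap) (simp add: sum_distrib_left)
  also have "[\<dots> = (\<Sum>S\<in>F. d S * (- (\<Prod>j\<in>S. int (y j))))] (mod int p)"
  proof (intro cong_sum cong_mult cong_refl)
    fix S assume "S \<in> F"
    then have S: "finite S" "card S = p - 1" using F by (auto simp: fam_def intro: finite_subset)
    show "[(\<Sum>k<p. \<Prod>j\<in>S. int (x j) + int k * int (y j)) = - (\<Prod>j\<in>S. int (y j))] (mod int p)"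
      by (rule ap_sum_prod[OF p S])
  qed
  also have "(\<Sum>S\<in>F. d S * (- (\<Prod>j\<in>S. int (y j)))) = - Qz d F y"
    by (simp add: Qz_def sum_negf)
  finally show ?thesis .
qed

lemma exists_poly:
  assumes p: "prime p" and Y: "finite Y" and card: "card Y < card (fam n p)"
  shows "\<exists>d. \<exists>S0\<in>fam n p. \<not> int p dvd d S0 \<and> (\<forall>y\<in>Y. int p dvd Qz d (fam n p) y)"
proof -
  let ?F = "fam n p"
  let ?A = "PiE ?F (\<lambda>_. {..<p})"
  let ?B = "PiE Y (\<lambda>_. {0..<int p})"
  let ?Phi = "\<lambda>c. restrict (\<lambda>y. Qz (\<lambda>S. int (c S)) ?F y mod int p) Y"
  have p2: "p \<ge> 2" using p by (simp add: prime_ge_2_nat)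
  have cA: "card ?A = p ^ card ?F" using fam_finite by (simp add: card_PiE)
  have cB: "card ?B = p ^ card Y" using Y by (simp add: card_PiE)
  have "p ^ card Y < p ^ card ?F" using p2 card by (intro power_strict_increasing) auto
  have sub: "?Phi ` ?A \<subseteq> ?B" using p2 by (auto simp: PiE_def)
  have "\<not> inj_on ?Phi ?A"
  proof
    assume "inj_on ?Phi ?A"
    then have "card ?A \<le> card ?B" using card_inj_on_le sub Y by (metis finite_PiE finite_atLeastLessThan_int)
    with cA cB \<open>p ^ card Y < p ^ card ?F\<close> show False by simp
  qed
  then obtain c c' where c: "c \<in> ?A" "c' \<in> ?A" "c \<noteq> c'" "?Phi c = ?Phi c'"
    unfolding inj_on_def by blast
  obtain S0 where S0: "S0 \<in> ?F" "c S0 \<noteq> c' S0"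
    using c(1-3) by (metis PiE_ext)
  define d where "d S = int (c S) - int (c' S)" for S
  have "\<not> int p dvd d S0"
  proof
    assume dv: "int p dvd d S0"
    have "d S0 \<noteq> 0" using S0 by (simp add: d_def)
    then have "\<bar>int p\<bar> \<le> \<bar>d S0\<bar>" using dv dvd_imp_le_int by blast
    moreover have "c S0 < p" "c' S0 < p" using c(1,2) S0(1) by auto
    ultimately show False by (simp add: d_def)
  qed
  moreover have "\<forall>y\<in>Y. int p dvd Qz d ?F y"
  proof
    fix y assume y: "y \<in> Y"
    have "Qz (\<lambda>S. int (c S)) ?F y mod int p = Qz (\<lambda>S. int (c' S)) ?F y mod int p"
      using fun_cong[OF c(4), of y] y by simp
    then have "int p dvd Qz (\<lambda>S. int (c S)) ?F y - Qz (\<lambda>S. int (c' S)) ?F y"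
      by (simp add: mod_eq_dvd_iff)
    moreover have "Qz (\<lambda>S. int (c S)) ?F y - Qz (\<lambda>S. int (c' S)) ?F y = Qz d ?F y"
      by (simp add: Qz_def d_def sum_subtractf[symmetric] left_diff_distrib)
    ultimately show "int p dvd Qz d ?F y" by simp
  qed
  ultimately show ?thesis using S0(1) by blast
qed

lemma prod_indicator_set:
  "finite S \<Longrightarrow> (\<Prod>j\<in>S. (if j \<in> S0 then 1 else 0 :: int)) = (if S \<subseteq> S0 then 1 else 0)"
proof (cases "S \<subseteq> S0")
  case True
  have "(\<Prod>j\<in>S. (if j \<in> S0 then 1 else 0 :: int)) = 1"
    by (rule prod.neutral) (use True in auto)
  then show ?thesis using True by simp
next
  case False
  assume "finite S"
  then show ?thesis using False by (auto intro!: prod_zero)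
qed

lemma good_exists:
  assumes p: "prime p" and S0: "S0 \<in> fam n p" and nd: "\<not> int p dvd d S0" and z: "z \<in> Fpn p n"
  shows "\<exists>y\<in>Fpn p n. \<not> int p dvd Qz d (fam n p) y \<and> (\<forall>j. j \<notin> S0 \<longrightarrow> y j = z j)"
proof -
  let ?F = "fam n p"
  have p2: "p \<ge> 2" using p by (simp add: prime_ge_2_nat)
  have S0n: "S0 \<subseteq> {..<n}" "card S0 = p - 1" using S0 by (auto simp: fam_def)
  have fS0: "finite S0" using S0n(1) finite_subset by blast
  define x0 where "x0 j = (if j \<in> S0 then 0 else z j)" for j
  define e where "e j = (if j \<in> S0 then 1 else 0::nat)" for j
  have "Qz d ?F e = (\<Sum>S\<in>?F. if S = S0 then d S else 0)"
    unfolding Qz_def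
  proof (rule sum.cong, rule refl)
    fix S assume S: "S \<in> ?F"
    have fS: "finite S" using S by (auto simp: fam_def intro: finite_subset)
    have "(\<Prod>j\<in>S. int (e j)) = (\<Prod>j\<in>S. (if j \<in> S0 then 1 else 0 :: int))"
      by (rule prod.cong) (auto simp: e_def)
    also have "\<dots> = (if S \<subseteq> S0 then 1 else 0)" by (rule prod_indicator_set[OF fS])
    also have "\<dots> = (if S = S0 then 1 else 0)"
      using card_subset_eq[OF fS0, of S] S S0n by (auto simp: fam_def)
    finally show "d S * (\<Prod>j\<in>S. int (e j)) = (if S = S0 then d S else 0)" by simp
  qed
  also have "\<dots> = d S0" using S0 fam_finite by simp
  finally have Qe: "Qz d ?F e = d S0" .
  have "\<exists>k<p. \<not> int p dvd Qz d ?F (ap_point p x0 k e)"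
  proof (rule ccontr)
    assume "\<not> ?thesis"
    then have "int p dvd (\<Sum>k<p. Qz d ?F (ap_point p x0 k e))" by (auto intro: dvd_sum)
    moreover have "[(\<Sum>k<p. Qz d ?F (ap_point p x0 k e)) = - Qz d ?F e] (mod int p)"
      by (rule ap_identity[OF p order_refl])
    ultimately have "int p dvd - Qz d ?F e" by (metis cong_dvd_iff)
    with Qe nd show False by simp
  qed
  then obtain k where k: "k < p" "\<not> int p dvd Qz d ?F (ap_point p x0 k e)" by blast
  have x0F: "x0 \<in> Fpn p n" using z by (auto simp: Fpn_def x0_def)
  have eF: "e \<in> Fpn p n" using S0n p2 by (auto simp: Fpn_def e_def)
  have yF: "ap_point p x0 k e \<in> Fpn p n" using ap_in_Fpn[OF _ x0F eF] p2 by simp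
  have "\<forall>j. j \<notin> S0 \<longrightarrow> ap_point p x0 k e j = z j"
  proof (intro allI impI)
    fix j assume "j \<notin> S0"
    then have "ap_point p x0 k e j = z j mod p" by (simp add: ap_point_def x0_def e_def)
    also have "\<dots> = z j" using z p2 by (cases "j < n") (auto simp: Fpn_def)
    finally show "ap_point p x0 k e j = z j" .
  qed
  with k yF show ?thesis by blast
qed

lemma good_card:
  assumes p: "prime p" and S0: "S0 \<in> fam n p" and nd: "\<not> int p dvd d S0"
  shows "card (Fpn p n) \<le> p ^ (p - 1) * card {y\<in>Fpn p n. \<not> int p dvd Qz d (fam n p) y}"
proof -
  let ?G = "{y\<in>Fpn p n. \<not> int p dvd Qz d (fam n p) y}"
  let ?Fib = "\<lambda>y. {x::nat\<Rightarrow>nat. (\<forall>j\<in>S0. x j < p) \<and> (\<forall>j. j\<notin>S0 \<longrightarrow> x j = y j)}"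
  have S0n: "S0 \<subseteq> {..<n}" "card S0 = p - 1" using S0 by (auto simp: fam_def)
  have fS0: "finite S0" using S0n(1) finite_subset by blast
  have sub: "Fpn p n \<subseteq> (\<Union>y\<in>?G. ?Fib y)"
  proof
    fix z assume z: "z \<in> Fpn p n"
    obtain y where y: "y \<in> Fpn p n" "\<not> int p dvd Qz d (fam n p) y" "\<forall>j. j \<notin> S0 \<longrightarrow> y j = z j"
      using good_exists[where d=d, OF p S0 nd z] by blast
    have "z \<in> ?Fib y" using y z S0n(1) by (auto simp: Fpn_def)
    then show "z \<in> (\<Union>y\<in>?G. ?Fib y)" using y by blast
  qed
  have fin: "finite (\<Union>y\<in>?G. ?Fib y)"
    using Fpn_finite box_card(2)[OF fS0] by auto
  have "card (Fpn p n) \<le> card (\<Union>y\<in>?G. ?Fib y)" by (rule card_mono[OF fin sub])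
  also have "\<dots> \<le> (\<Sum>y\<in>?G. card (?Fib y))" by (rule card_UN_le) (simp add: Fpn_finite)
  also have "\<dots> = (\<Sum>y\<in>?G. p ^ (p - 1))" using box_card(1)[OF fS0] S0n by simp
  also have "\<dots> = p ^ (p - 1) * card ?G" by simp
  finally show ?thesis .
qed



lemma abs_le_lr_norm:
  assumes p: "0 < p" and v: "v \<in> Fpn p n"
  shows "\<bar>g v\<bar> \<le> lr_norm p n (real p) g"
proof -
  have "\<bar>g v\<bar> powr real p \<le> (\<Sum>w\<in>Fpn p n. \<bar>g w\<bar> powr real p)"
    by (rule member_le_sum) (use v Fpn_finite in auto)
  then have "(\<bar>g v\<bar> powr real p) powr (1 / real p) \<le> (\<Sum>w\<in>Fpn p n. \<bar>g w\<bar> powr real p) powr (1 / real p)"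
    by (intro powr_mono2) auto
  moreover have "(\<bar>g v\<bar> powr real p) powr (1 / real p) = \<bar>g v\<bar>"
    using p by (simp add: powr_powr)
  ultimately show ?thesis by (simp add: lr_norm_def)
qed

lemma lr_norm_pos:
  assumes p: "0 < p" and v: "v \<in> Fpn p n" and nz: "g v \<noteq> 0"
  shows "lr_norm p n (real p) g > 0"
proof -
  have "0 < \<bar>g v\<bar> powr real p" using nz by simp
  also have "\<bar>g v\<bar> powr real p \<le> (\<Sum>w\<in>Fpn p n. \<bar>g w\<bar> powr real p)"
    by (rule member_le_sum) (use v Fpn_finite in auto)
  finally show ?thesis by (simp add: lr_norm_def)
qed

lemma lr_norm_le:
  assumes p: "0 < p" and g: "\<And>v. v \<in> Fpn p n \<Longrightarrow> \<bar>g v\<bar> \<le> 1"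
  shows "lr_norm p n (real p) g \<le> real (card (Fpn p n)) powr (1 / real p)"
proof -
  have "(\<Sum>w\<in>Fpn p n. \<bar>g w\<bar> powr real p) \<le> (\<Sum>w\<in>Fpn p n. 1)"
  proof (rule sum_mono)
    fix w assume "w \<in> Fpn p n"
    then have "\<bar>g w\<bar> powr real p \<le> 1 powr real p" using g by (intro powr_mono2) auto
    then show "\<bar>g w\<bar> powr real p \<le> 1" by simp
  qed
  then have "(\<Sum>w\<in>Fpn p n. \<bar>g w\<bar> powr real p) powr (1 / real p) \<le> (\<Sum>w\<in>Fpn p n. 1) powr (1 / real p)"
    by (intro powr_mono2 sum_nonneg) auto
  then show ?thesis by (simp add: lr_norm_def)
qed

lemma sum_mset_abs_bound:
  fixes f :: "'a \<Rightarrow> real"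
  assumes "\<And>y. y \<in># D \<Longrightarrow> \<bar>f y\<bar> \<le> c"
  shows "\<bar>\<Sum>y\<in>#D. f y\<bar> \<le> real (size D) * c"
  using assms
proof (induction D)
  case empty then show ?case by simp
next
  case (add x D)
  have "\<bar>\<Sum>y\<in>#add_mset x D. f y\<bar> \<le> \<bar>f x\<bar> + \<bar>\<Sum>y\<in>#D. f y\<bar>" by simp
  also have "\<dots> \<le> c + real (size D) * c" using add by (intro add_mono) auto
  finally show ?case by (simp add: algebra_simps)
qed

lemma adj_bound:
  assumes p: "0 < p" and D: "set_mset D \<subseteq> Fpn p n" "D \<noteq> {#}"
    and N: "\<And>i v. i < p \<Longrightarrow> v \<in> Fpn p n \<Longrightarrow> \<bar>f i v\<bar> \<le> N i"
  shows "\<bar>adj_form p n D f\<bar> \<le> real (card (Fpn p n)) * (\<Prod>i<p. N i)"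
proof -
  let ?P = "{\<sigma>. \<sigma> permutes {0..<p}}"
  let ?M = "real (card (Fpn p n))"
  have z: "(\<lambda>_. 0) \<in> Fpn p n" using p by (simp add: Fpn_def)
  have N0: "0 \<le> N i" if "i < p" for i using N[OF that z] by linarith
  have inner: "\<bar>\<Sum>x\<in>Fpn p n. \<Sum>\<sigma>\<in>?P. \<Prod>i<p. f i (ap_point p x (\<sigma> i) y)\<bar>
      \<le> ?M * fact p * (\<Prod>i<p. N i)" if y: "y \<in># D" for y
  proof -
    have yF: "y \<in> Fpn p n" using y D by auto
    have "\<bar>\<Sum>x\<in>Fpn p n. \<Sum>\<sigma>\<in>?P. \<Prod>i<p. f i (ap_point p x (\<sigma> i) y)\<bar>
        \<le> (\<Sum>x\<in>Fpn p n. \<Sum>\<sigma>\<in>?P. \<bar>\<Prod>i<p. f i (ap_point p x (\<sigma> i) y)\<bar>)"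
      by (rule order_trans[OF sum_abs]) (intro sum_mono sum_abs)
    also have "\<dots> \<le> (\<Sum>x\<in>Fpn p n. \<Sum>\<sigma>\<in>?P. \<Prod>i<p. N i)"
    proof (intro sum_mono)
      fix x and \<sigma> :: "nat \<Rightarrow> nat" assume "x \<in> Fpn p n"
      then have "ap_point p x (\<sigma> i) y \<in> Fpn p n" for i using ap_in_Fpn[OF p _ yF] by blast
      then show "\<bar>\<Prod>i<p. f i (ap_point p x (\<sigma> i) y)\<bar> \<le> (\<Prod>i<p. N i)"
        unfolding abs_prod by (intro prod_mono) (auto intro: N)
    qed
    also have "\<dots> = ?M * fact p * (\<Prod>i<p. N i)"
      using card_permutations[of "{0..<p}" p] by simp
    finally show ?thesis .
  qed
  have "\<bar>adj_form p n D f\<bar> = \<bar>\<Sum>y\<in>#D. \<Sum>x\<in>Fpn p n. \<Sum>\<sigma>\<in>?P. \<Prod>i<p. f i (ap_point p x (\<sigma> i) y)\<bar>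
      / (fact p * real (size D))"
    using adj_formula[OF p D(1)] by simp
  also have "\<dots> \<le> (real (size D) * (?M * fact p * (\<Prod>i<p. N i))) / (fact p * real (size D))"
    by (intro divide_right_mono sum_mset_abs_bound inner) auto
  also have "\<dots> = ?M * (\<Prod>i<p. N i)" using D(2) by (simp add: field_simps)
  finally show ?thesis .
qed

lemma lambda_ge:
  assumes p: "0 < p" and D: "set_mset D \<subseteq> Fpn p n" "D \<noteq> {#}"
    and f: "\<And>i. i < p \<Longrightarrow> \<exists>v\<in>Fpn p n. f i v \<noteq> 0"
  shows "(adj_form p n D f - adj_form p n (mset_set (Fpn p n)) f) / (\<Prod>i<p. lr_norm p n (real p) (f i))
         \<le> lambda_AP p n D"
proof -
  let ?S = "{f. \<forall>i<p. \<exists>v\<in>Fpn p n. f i v \<noteq> 0}"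
  let ?A = "\<lambda>f. adj_form p n D f - adj_form p n (mset_set (Fpn p n)) f"
  let ?r = "\<lambda>f. ?A f / (\<Prod>i<p. lr_norm p n (real p) (f i))"
  let ?M = "real (card (Fpn p n))"
  have z: "(\<lambda>_. 0) \<in> Fpn p n" using p by (simp add: Fpn_def)
  have DF: "set_mset (mset_set (Fpn p n)) \<subseteq> Fpn p n" "mset_set (Fpn p n) \<noteq> {#}"
    using Fpn_finite z by (auto simp: mset_set_empty_iff)
  have "bdd_above (?r ` ?S)"
  proof (rule bdd_aboveI2)
    fix g :: "nat \<Rightarrow> (nat \<Rightarrow> nat) \<Rightarrow> real" assume g: "g \<in> ?S"
    let ?N = "\<lambda>i. lr_norm p n (real p) (g i)"
    have Npos: "0 < (\<Prod>i<p. ?N i)"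
      using g lr_norm_pos[OF p] by (intro prod_pos) blast
    have b: "\<bar>f' i v\<bar> \<le> ?N i" if "i < p" "v \<in> Fpn p n" "f' = g" for f' i v
      using abs_le_lr_norm[OF p that(2)] that(3) by simp
    have "\<bar>?A g\<bar> \<le> ?M * (\<Prod>i<p. ?N i) + ?M * (\<Prod>i<p. ?N i)"
      using adj_bound[OF p D, of g ?N] adj_bound[OF p DF, of g ?N] b by (smt (verit))
    then have "?A g \<le> 2 * ?M * (\<Prod>i<p. ?N i)" by simp
    then show "?r g \<le> 2 * ?M" using Npos by (simp add: divide_le_eq)
  qed
  moreover have "f \<in> ?S" using f by blast
  ultimately have "?r f \<le> (SUP g\<in>?S. ?r g)" by (intro cSUP_upper)
  then show ?thesis by (simp add: lambda_AP_def form_norm_def)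
qed



lemma card_set_mset_le_size: "card (set_mset D) \<le> size D"
proof -
  have "card (set_mset D) = (\<Sum>x\<in>set_mset D. 1)" by simp
  also have "\<dots> \<le> (\<Sum>x\<in>set_mset D. count D x)" by (intro sum_mono) auto
  also have "\<dots> = size D" by (simp add: size_multiset_overloaded_eq)
  finally show ?thesis .
qed

lemma prod_sign_first:
  fixes p :: nat
  assumes "0 < p"
  shows "(\<Prod>i<p. (if i = 0 then -1 else 1) * (c i :: real)) = - (\<Prod>i<p. c i)"
proof -
  obtain q where q: "p = Suc q" using assms by (cases p) auto
  have "(\<Prod>i<Suc q. (if i = 0 then -1 else 1) * c i) = - c 0 * (\<Prod>i<q. c (Suc i))"
    by (simp only: prod.lessThan_Suc_shift) simp
  also have "\<dots> = - (\<Prod>i<Suc q. c i)" using prod.lessThan_Suc_shift[of c q] by simp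
  finally show ?thesis using q by simp
qed

lemma prod_ind:
  "(\<Prod>i<(p::nat). (if P i then 1 else 0 :: real)) = (if \<forall>i<p. P i then 1 else 0)"
proof (cases "\<forall>i<p. P i")
  case True
  then have "(\<Prod>i<p. (if P i then 1 else 0 :: real)) = 1" by (intro prod.neutral) auto
  then show ?thesis using True by simp
next
  case False
  then obtain i where "i < p" "\<not> P i" by auto
  then have "(\<Prod>i<p. (if P i then 1 else 0 :: real)) = 0" by (intro prod_zero) auto
  then show ?thesis using False by simp
qed

lemma sum_sum_ind_card:
  assumes "finite A"
  shows "(\<Sum>y\<in>A. \<Sum>x\<in>A. (if P x y then 1 else 0 :: real)) = real (card {b\<in>A \<times> A. P (fst b) (snd b)})"
proof -
  have "(\<Sum>y\<in>A. \<Sum>x\<in>A. (if P x y then 1 else 0 :: real)) = (\<Sum>x\<in>A. \<Sum>y\<in>A. (if P x y then 1 else 0 :: real))"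
    by (rule sum.swap)
  also have "\<dots> = (\<Sum>b\<in>A \<times> A. (if P (fst b) (snd b) then 1 else 0 :: real))"
    by (simp add: sum.cartesian_product case_prod_beta)
  also have "\<dots> = (\<Sum>b\<in>{b\<in>A \<times> A. P (fst b) (snd b)}. 1)"
    using sum.inter_filter[of "A \<times> A" "\<lambda>_. 1::real" "\<lambda>b. P (fst b) (snd b)"] assms by simp
  also have "\<dots> = real (card {b\<in>A \<times> A. P (fst b) (snd b)})" by simp
  finally show ?thesis .
qed

lemma exists_big_fiber:
  assumes fin: "finite B" and ne: "B \<noteq> {}" and im: "V ` B \<subseteq> C" and fC: "finite C"
  shows "\<exists>a\<in>V ` B. card B \<le> card C * card {b\<in>B. V b = a}"
proof -
  let ?fib = "\<lambda>a. card {b\<in>B. V b = a}"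
  let ?K = "Max (?fib ` (V ` B))"
  have ne': "V ` B \<noteq> {}" using ne by simp
  have fV: "finite (V ` B)" using fin by simp
  have "B \<subseteq> (\<Union>a\<in>V ` B. {b\<in>B. V b = a})" by auto
  then have "card B \<le> card (\<Union>a\<in>V ` B. {b\<in>B. V b = a})"
    by (intro card_mono) (use fin in auto)
  also have "\<dots> \<le> (\<Sum>a\<in>V ` B. ?fib a)" by (rule card_UN_le[OF fV])
  also have "\<dots> \<le> card (V ` B) * ?K"
  proof -
    have "\<And>a. a \<in> V ` B \<Longrightarrow> ?fib a \<le> ?K" using fV by (intro Max_ge) auto
    then show ?thesis using sum_bounded_above[of "V ` B" ?fib ?K] by simp
  qed
  also have "\<dots> \<le> card C * ?K" using card_mono[OF fC im] by simp
  finally have le: "card B \<le> card C * ?K" .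
  have "?K \<in> ?fib ` (V ` B)" using fV ne' by (intro Max_in) auto
  then obtain a where a1: "a \<in> V ` B" and a2: "?fib a = ?K" by (rule imageE) simp
  have "card B \<le> card C * ?fib a" using le a2 by simp
  then show ?thesis using a1 by blast
qed



theorem theorem2p1:
  fixes p :: nat
  assumes "prime p"
  shows "\<exists>\<epsilon>0 \<delta>0 :: real. \<epsilon>0 > 0 \<and> \<delta>0 > 0 \<and>
    (\<forall>(n::nat) (D :: (nat \<Rightarrow> nat) multiset) (\<epsilon>::real).
       n \<ge> p ^ 2 \<longrightarrow> \<epsilon> < \<epsilon>0 \<longrightarrow> D \<noteq> {#} \<longrightarrow> set_mset D \<subseteq> Fpn p n \<longrightarrow>
       lambda_AP p n D \<le> \<epsilon> \<longrightarrow> real (size D) \<ge> \<delta>0 * real n ^ (p - 1))"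
proof -
  have pr: "prime p" by fact
  have p2: "p \<ge> 2" using pr by (simp add: prime_ge_2_nat)
  have p0: "0 < p" using p2 by simp
  define \<epsilon>0 :: real where "\<epsilon>0 = 1 / (fact p * real p ^ (2 * p - 1))"
  define \<delta>0 :: real where "\<delta>0 = 1 / real (p - 1) ^ (p - 1)"
  have e0: "\<epsilon>0 > 0" using p0 by (simp add: \<epsilon>0_def)
  have d0: "\<delta>0 > 0" using p2 by (simp add: \<delta>0_def)
  have main: "real (size D) \<ge> \<delta>0 * real n ^ (p - 1)"
    if n: "n \<ge> p ^ 2" and eps: "\<epsilon> < \<epsilon>0" and Dne: "D \<noteq> {#}" and DF: "set_mset D \<subseteq> Fpn p n"
      and lam: "lambda_AP p n D \<le> \<epsilon>"
    for n D \<epsilon>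
  proof (rule ccontr)
    assume "\<not> ?thesis"
    then have small: "real (size D) < \<delta>0 * real n ^ (p - 1)" by simp
    have "p \<le> p ^ 2" using p0 by (simp add: power2_eq_square)
    then have pn: "p - 1 \<le> n" using n by simp
    have "\<delta>0 * real n ^ (p - 1) = (real n / real (p - 1)) ^ (p - 1)"
      by (simp add: \<delta>0_def power_divide)
    also have "\<dots> \<le> real (n choose (p - 1))" by (rule binomial_ge_n_over_k_pow_k[OF pn])
    finally have "real (card (set_mset D)) < real (card (fam n p))"
      using small card_set_mset_le_size[of D] fam_card[of n p] by linarith
    then have cardlt: "card (set_mset D) < card (fam n p)" by simp
    obtain d S0 where S0: "S0 \<in> fam n p" "\<not> int p dvd d S0"
      and dD: "\<forall>y\<in>set_mset D. int p dvd Qz d (fam n p) y"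
      using exists_poly[OF pr _ cardlt] by auto
    define Q where "Q y = Qz d (fam n p) y mod int p" for y
    define G where "G = {y\<in>Fpn p n. \<not> int p dvd Qz d (fam n p) y}"
    define M where "M = card (Fpn p n)"
    have MG: "M \<le> p ^ (p - 1) * card G"
      unfolding M_def G_def by (rule good_card[where d=d, OF pr S0])
    have Mpos: "M > 0" unfolding M_def Fpn_card using p0 by simp
    have fG: "finite G" unfolding G_def using Fpn_finite by simp
    define B where "B = Fpn p n \<times> G"
    have fB: "finite B" unfolding B_def using Fpn_finite fG by simp
    have cB: "card B = M * card G" unfolding B_def M_def by (simp add: card_cartesian_product)
    have "card G \<noteq> 0" using MG Mpos by (cases "card G = 0") auto
    then have "card B \<noteq> 0" using cB Mpos by simp
    then have Bne: "B \<noteq> {}" by auto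
    define V where "V b = (\<lambda>i\<in>{0..<p}. Q (ap_point p (fst b) i (snd b)))" for b
    define C where "C = PiE {0..<p} (\<lambda>_. {0..<int p})"
    have VC: "V ` B \<subseteq> C"
      using p0 by (auto simp: V_def C_def Q_def)
    have fC: "finite C" unfolding C_def by (simp add: finite_PiE)
    have cC: "card C = p ^ p" unfolding C_def by (simp add: card_PiE)
    obtain a where aV: "a \<in> V ` B" and afib: "card B \<le> card C * card {b\<in>B. V b = a}"
      using exists_big_fiber[OF fB Bne VC fC] by blast
    obtain b0 where b0: "b0 \<in> B" "V b0 = a" using aV by blast
    have key: "[(\<Sum>i<p. a i) = - Qz d (fam n p) y] (mod int p)"
      if \<sigma>: "\<sigma> permutes {0..<p}" and ai: "\<forall>i<p. Q (ap_point p x (\<sigma> i) y) = a i" for x y \<sigma>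
    proof -
      have "(\<Sum>i<p. a i) = (\<Sum>i\<in>{0..<p}. Q (ap_point p x (\<sigma> i) y))"
        using ai by (simp add: atLeast0LessThan)
      also have "\<dots> = (\<Sum>i\<in>{0..<p}. Q (ap_point p x i y))"
        using sum.permute[OF \<sigma>, of "\<lambda>i. Q (ap_point p x i y)"] by (simp add: comp_def)
      also have "[\<dots> = (\<Sum>i\<in>{0..<p}. Qz d (fam n p) (ap_point p x i y))] (mod int p)"
        by (rule cong_sum) (simp add: Q_def cong_def)
      also have "(\<Sum>i\<in>{0..<p}. Qz d (fam n p) (ap_point p x i y)) = (\<Sum>i<p. Qz d (fam n p) (ap_point p x i y))"
        by (simp add: atLeast0LessThan)
      also have "[\<dots> = - Qz d (fam n p) y] (mod int p)"
        by (rule ap_identity[OF pr order_refl])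
      finally show ?thesis .
    qed
    have a_sum: "\<not> int p dvd (\<Sum>i<p. a i)"
    proof
      assume dv: "int p dvd (\<Sum>i<p. a i)"
      have "\<forall>i<p. Q (ap_point p (fst b0) (id i) (snd b0)) = a i"
        using b0(2) by (auto simp: V_def)
      then have "[(\<Sum>i<p. a i) = - Qz d (fam n p) (snd b0)] (mod int p)"
        by (intro key[of id]) (simp add: permutes_id)
      then have "int p dvd - Qz d (fam n p) (snd b0)" using dv by (metis cong_dvd_iff)
      moreover have "snd b0 \<in> G" using b0(1) by (auto simp: B_def)
      ultimately show False by (simp add: G_def)
    qed
    define cnt where "cnt = card {b\<in>Fpn p n \<times> Fpn p n. \<forall>i<p. Q (ap_point p (fst b) i (snd b)) = a i}"
    have "{b\<in>B. V b = a} \<subseteq> {b\<in>Fpn p n \<times> Fpn p n. \<forall>i<p. Q (ap_point p (fst b) i (snd b)) = a i}"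
      by (auto simp: B_def G_def V_def)
    then have fib_le: "card {b\<in>B. V b = a} \<le> cnt"
      unfolding cnt_def by (intro card_mono) (simp_all add: Fpn_finite)
    have MM: "M * M \<le> p ^ (2 * p - 1) * cnt"
    proof -
      have "M * M \<le> p ^ (p - 1) * card G * M" using MG by simp
      also have "\<dots> = p ^ (p - 1) * card B" using cB by simp
      also have "\<dots> \<le> p ^ (p - 1) * (p ^ p * cnt)"
        using afib fib_le cC by (intro mult_left_mono) (auto intro: order_trans)
      also have "\<dots> = p ^ (2 * p - 1) * cnt"
      proof -
        have "p ^ (p - 1) * p ^ p = p ^ (2 * p - 1)" using p0 by (simp add: power_add[symmetric] mult_2)
        then show ?thesis by (simp add: mult.assoc)
      qed
      finally show ?thesis .
    qed
    have cntpos: "cnt > 0"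
    proof (rule ccontr)
      assume "\<not> cnt > 0"
      then have "M * M = 0" using MM by simp
      then show False using Mpos by simp
    qed
    then obtain x1 y1 where xy1: "x1 \<in> Fpn p n" "y1 \<in> Fpn p n" "\<forall>i<p. Q (ap_point p x1 i y1) = a i"
      unfolding cnt_def by (auto simp: card_gt_0_iff)
    define f where "f i v = (if i = 0 then -1 else 1) * (if Q v = a i then 1 else (0::real))" for i v
    have fnz: "\<exists>v\<in>Fpn p n. f i v \<noteq> 0" if "i < p" for i
      using xy1 that ap_in_Fpn[OF p0 xy1(1,2)] by (auto simp: f_def)
    have fabs: "\<bar>f i v\<bar> \<le> 1" for i v by (simp add: f_def)
    have prodf: "(\<Prod>i<p. f i (w i)) = - (if \<forall>i<p. Q (w i) = a i then 1 else 0)" for w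
      unfolding f_def by (simp add: prod_sign_first[OF p0] prod_ind)
    have AD: "adj_form p n D f = 0"
    proof -
      have Z: "(\<Prod>i<p. f i (ap_point p x (\<sigma> i) y)) = 0"
        if y: "y \<in># D" and \<sigma>: "\<sigma> \<in> {\<sigma>. \<sigma> permutes {0..<p}}" for x y \<sigma>
      proof -
        have "\<not> (\<forall>i<p. Q (ap_point p x (\<sigma> i) y) = a i)"
        proof
          assume "\<forall>i<p. Q (ap_point p x (\<sigma> i) y) = a i"
          then have "[(\<Sum>i<p. a i) = - Qz d (fam n p) y] (mod int p)" using key \<sigma> by blast
          moreover have "int p dvd Qz d (fam n p) y" using dD y by blast
          ultimately have "int p dvd (\<Sum>i<p. a i)" by (metis cong_dvd_iff dvd_minus_iff)
          with a_sum show False by simp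
        qed
        then show ?thesis by (simp add: prodf)
      qed
      have "(\<Sum>y\<in>#D. \<Sum>x\<in>Fpn p n. \<Sum>\<sigma>\<in>{\<sigma>. \<sigma> permutes {0..<p}}. \<Prod>i<p. f i (ap_point p x (\<sigma> i) y))
          = (\<Sum>y\<in>#D. (0::real))"
      proof (rule sum_mset_cong')
        fix y assume y: "y \<in># D"
        show "(\<Sum>x\<in>Fpn p n. \<Sum>\<sigma>\<in>{\<sigma>. \<sigma> permutes {0..<p}}. \<Prod>i<p. f i (ap_point p x (\<sigma> i) y)) = 0"
          by (intro sum.neutral ballI Z[OF y])
      qed
      then show ?thesis by (simp add: adj_formula[OF p0 DF])
    qed
    have AF: "adj_form p n (mset_set (Fpn p n)) f \<le> - real cnt / (fact p * real M)"
    proof -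
      let ?P = "{\<sigma>. \<sigma> permutes {0..<p}}"
      let ?ind = "\<lambda>x y \<sigma>. (if \<forall>i<p. Q (ap_point p x (\<sigma> i) y) = a i then 1 else 0 :: real)"
      have DF': "set_mset (mset_set (Fpn p n)) \<subseteq> Fpn p n" using Fpn_finite by simp
      have fP: "finite ?P" by (rule finite_permutations) simp
      have "adj_form p n (mset_set (Fpn p n)) f
          = (\<Sum>y\<in>Fpn p n. \<Sum>x\<in>Fpn p n. \<Sum>\<sigma>\<in>?P. \<Prod>i<p. f i (ap_point p x (\<sigma> i) y)) / (fact p * real M)"
        by (simp add: adj_formula[OF p0 DF'] sum_unfold_sum_mset M_def)
      also have "(\<Sum>y\<in>Fpn p n. \<Sum>x\<in>Fpn p n. \<Sum>\<sigma>\<in>?P. \<Prod>i<p. f i (ap_point p x (\<sigma> i) y))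
          = - (\<Sum>y\<in>Fpn p n. \<Sum>x\<in>Fpn p n. \<Sum>\<sigma>\<in>?P. ?ind x y \<sigma>)"
        by (simp add: prodf sum_negf)
      also have "(\<Sum>y\<in>Fpn p n. \<Sum>x\<in>Fpn p n. ?ind x y id) \<le> (\<Sum>y\<in>Fpn p n. \<Sum>x\<in>Fpn p n. \<Sum>\<sigma>\<in>?P. ?ind x y \<sigma>)"
        by (intro sum_mono member_le_sum) (simp_all add: permutes_id[unfolded id_def] fP)
      then have "- (\<Sum>y\<in>Fpn p n. \<Sum>x\<in>Fpn p n. \<Sum>\<sigma>\<in>?P. ?ind x y \<sigma>) \<le> - real cnt"
        using sum_sum_ind_card[OF Fpn_finite, of "\<lambda>x y. \<forall>i<p. Q (ap_point p x i y) = a i"]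
        by (simp add: cnt_def)
      finally show ?thesis using Mpos by (simp add: divide_right_mono)
    qed
    let ?N = "\<lambda>i. lr_norm p n (real p) (f i)"
    have Npos: "0 < (\<Prod>i<p. ?N i)"
      using fnz lr_norm_pos[OF p0] by (intro prod_pos) blast
    have Nle: "(\<Prod>i<p. ?N i) \<le> real M"
    proof -
      have Ni: "?N i \<le> real M powr (1 / real p)" for i
        unfolding M_def by (rule lr_norm_le[OF p0]) (rule fabs)
      have Ni0: "0 \<le> ?N i" if "i < p" for i
        using fnz[OF that] lr_norm_pos[OF p0] by (meson less_imp_le)
      have "(\<Prod>i<p. ?N i) \<le> (\<Prod>i<p. real M powr (1 / real p))"
        using Ni Ni0 by (intro prod_mono) auto
      also have "\<dots> = (real M powr (1 / real p)) ^ p" by simp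
      also have "\<dots> = real M" using Mpos p0 by (simp add: powr_power)
      finally show ?thesis .
    qed
    have ratio: "(adj_form p n D f - adj_form p n (mset_set (Fpn p n)) f) / (\<Prod>i<p. ?N i) \<le> lambda_AP p n D"
      by (rule lambda_ge[OF p0 DF Dne fnz])
    have num: "real cnt / (fact p * real M) \<le> adj_form p n D f - adj_form p n (mset_set (Fpn p n)) f"
      using AD AF by simp
    have numpos: "0 < real cnt / (fact p * real M)" using cntpos Mpos by simp
    have "real cnt / (fact p * real M) / real M \<le> real cnt / (fact p * real M) / (\<Prod>i<p. ?N i)"
      using Npos Nle numpos by (intro divide_left_mono) auto
    also have "\<dots> \<le> (adj_form p n D f - adj_form p n (mset_set (Fpn p n)) f) / (\<Prod>i<p. ?N i)"
      using num Npos by (intro divide_right_mono) auto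
    finally have r1: "real cnt / (fact p * real M) / real M \<le> lambda_AP p n D" using ratio by linarith
    have "\<epsilon>0 \<le> real cnt / (fact p * real M) / real M"
    proof -
      have MMr: "real M * real M \<le> real p ^ (2 * p - 1) * real cnt"
        using MM by (metis of_nat_le_iff of_nat_mult of_nat_power)
      have pos1: "0 < fact p * real p ^ (2 * p - 1)" using p0 by simp
      have pos2: "0 < fact p * real M * real M" using Mpos by simp
      have "\<epsilon>0 = 1 / (fact p * real p ^ (2 * p - 1))" by (simp add: \<epsilon>0_def)
      also have "\<dots> \<le> real cnt / (fact p * real M * real M)"
      proof -
        have Ppos: "0 < real p ^ (2 * p - 1)" using p0 by simp
        have "real M * real M / real p ^ (2 * p - 1) \<le> real cnt"
          using Ppos MMr by (simp add: pos_divide_le_eq mult.commute)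
        then show ?thesis using pos1 pos2 Ppos by (simp add: field_simps)
      qed
      also have "\<dots> = real cnt / (fact p * real M) / real M" by simp
      finally show ?thesis .
    qed
    with r1 lam eps show False by linarith
  qed
  show ?thesis using e0 d0 main by blast
qed

end
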